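(* Let $c>0$, $\lambda>0$ and define, for $t>0$ and $|x|<ct$, $$p(x,t)=\frac{\lambda\, I_0\!\left(\frac{\lambda}{c}\sqrt{c^2t^2-x^2}\right)}{2c\,\sinh \lambda t}.$$ Then for each $t>0$, $p(\cdot,t)$ is a probability density on $(-ct,ct)$ (i.e. $\int_{-ct}^{ct}p(x,t)\,dx=1$), and $p$ satisfies $$\frac{\partial^2 p}{\partial t^2}+2\lambda\coth(\lambda t)\,\frac{\partial p}{\partial t}= c^2 \frac{\partial^2 p}{\partial x^2}\qquad (t>0,\ |x|<ct).$$
   Context: $I_0(z)=\sum_{k\ge0}\frac{(z/2)^{2k}}{(k!)^2}$ is the modified Bessel function of the first kind of order $0$. *)

theory Defs
  imports "HOL-Analysis.Analysis"
begin

definition bessel_I0 :: "real \<Rightarrow> real" where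
  "bessel_I0 z = (\<Sum>k. (z / 2) ^ (2 * k) / (fact k) ^ 2)"

definition tel_density :: "real \<Rightarrow> real \<Rightarrow> real \<Rightarrow> real \<Rightarrow> real" where
  "tel_density c lam x t =
     lam * bessel_I0 ((lam / c) * sqrt (c\<^sup>2 * t\<^sup>2 - x\<^sup>2)) / (2 * c * sinh (lam * t))"

end

theory Submission
  imports Defs
begin


definition bc :: "nat \<Rightarrow> real" where "bc n = inverse ((fact n)^2)"
definition g0 :: "real \<Rightarrow> real" where "g0 z = (\<Sum>n. bc n * z^n)"
definition g1 :: "real \<Rightarrow> real" where "g1 z = (\<Sum>n. diffs bc n * z^n)"
definition g2 :: "real \<Rightarrow> real" where "g2 z = (\<Sum>n. diffs (diffs bc) n * z^n)"

lemma summable_bc: "summable (\<lambda>n. bc n * z^n)"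
proof (rule summable_comparison_test')
  show "summable (\<lambda>n. \<bar>z\<bar>^n / fact n)"
    using summable_exp[of "\<bar>z\<bar>"] by (simp add: divide_inverse mult.commute)
  fix n :: nat
  have "fact n \<le> (fact n :: real)^2" by (simp add: power2_eq_square)
  then have "inverse ((fact n)^2) \<le> inverse (fact n :: real)"
    by (intro le_imp_inverse_le) auto
  then have "inverse ((fact n)^2) * \<bar>z\<bar>^n \<le> inverse (fact n :: real) * \<bar>z\<bar>^n"
    by (intro mult_right_mono) auto
  then show "norm (bc n * z^n) \<le> \<bar>z\<bar>^n / fact n"
    by (simp add: bc_def abs_mult power_abs divide_inverse mult.commute)
qed

lemma summable_bc1: "summable (\<lambda>n. diffs bc n * z^n)"
  by (rule termdiff_converges_all) (rule summable_bc)

lemma summable_bc2: "summable (\<lambda>n. diffs (diffs bc) n * z^n)"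
  by (rule termdiff_converges_all) (rule summable_bc1)

lemma g0_deriv: "(g0 has_real_derivative g1 z) (at z)"
  unfolding g0_def[abs_def] g1_def
  by (rule termdiffs_strong_converges_everywhere) (rule summable_bc)

lemma g1_deriv: "(g1 has_real_derivative g2 z) (at z)"
  unfolding g1_def[abs_def] g2_def
  by (rule termdiffs_strong_converges_everywhere) (rule summable_bc1)

lemma diffs_bc: "real (Suc n) * diffs bc n = bc n"
proof -
  have "fact (Suc n) = real (Suc n) * fact n" by simp
  then show ?thesis
    by (simp add: diffs_def bc_def power2_eq_square field_simps del: fact_Suc of_nat_Suc)
qed

lemma g_ode: "g0 z = g1 z + z * g2 z"
proof -
  define f where "f n = real n * diffs bc n * z^n" for n
  have "(\<lambda>n. diffs (diffs bc) n * z^n) sums g2 z"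
    unfolding g2_def using summable_bc2 by (rule summable_sums)
  then have "(\<lambda>n. z * (diffs (diffs bc) n * z^n)) sums (z * g2 z)"
    by (rule sums_mult)
  moreover have "(\<lambda>n. z * (diffs (diffs bc) n * z^n)) = (\<lambda>n. f (Suc n))"
    by (auto simp: f_def diffs_def)
  ultimately have "f sums (z * g2 z + f 0)" by (simp add: sums_Suc_iff)
  then have 1: "f sums (z * g2 z)" by (simp add: f_def)
  have 2: "(\<lambda>n. diffs bc n * z^n) sums g1 z"
    unfolding g1_def using summable_bc1 by (rule summable_sums)
  from sums_add[OF 2 1] have "(\<lambda>n. diffs bc n * z^n + f n) sums (g1 z + z * g2 z)" .
  moreover have "(\<lambda>n. diffs bc n * z^n + f n) = (\<lambda>n. bc n * z^n)"
  proof
    fix n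
    have "diffs bc n * z^n + f n = (real (Suc n) * diffs bc n) * z^n"
      by (simp add: f_def algebra_simps)
    then show "diffs bc n * z^n + f n = bc n * z^n" by (simp only: diffs_bc)
  qed
  ultimately have "(\<lambda>n. bc n * z^n) sums (g1 z + z * g2 z)" by simp
  then show ?thesis unfolding g0_def by (simp add: sums_iff)
qed

lemma bessel_g0: "bessel_I0 z = g0 ((z/2)^2)"
proof -
  have "(z/2)^(2*k)/(fact k)^2 = inverse((fact k)^2) * ((z/2)^2)^k" for k
    by (subst power_mult) (simp only: divide_inverse mult.commute)
  then show ?thesis unfolding bessel_I0_def g0_def bc_def by simp
qed

definition Jc :: "real \<Rightarrow> nat \<Rightarrow> real" where
  "Jc A n = A^(2*n+1) * 2^(2*n+1) * (fact n)^2 / fact (2*n+1)"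

lemma J_int:
  assumes A: "A \<ge> 0"
  shows "((\<lambda>x. (A^2-x^2)^n) has_integral Jc A n) {-A..A}"
proof (induction n)
  case 0
  show ?case using A has_integral_const_real[of "1::real" "-A" A] by (simp add: Jc_def mult.commute real_scaleR_def)
next
  case (Suc n)
  have "((\<lambda>x. (A^2-x^2)^(Suc n) - 2 * real (Suc n) * x^2 * (A^2-x^2)^n) has_integral
        (A * (A^2-A^2)^(Suc n) - (-A) * (A^2-(-A)^2)^(Suc n))) {-A..A}"
  proof (rule fundamental_theorem_of_calculus)
    show "-A \<le> A" using A by simp
    fix x :: real
    show "((\<lambda>x. x * (A^2-x^2)^(Suc n)) has_vector_derivative
           ((A^2-x^2)^(Suc n) - 2 * real (Suc n) * x^2 * (A^2-x^2)^n)) (at x within {-A..A})"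
      unfolding has_real_derivative_iff_has_vector_derivative [symmetric]
    proof -
      have d: "((\<lambda>x. A^2-x^2) has_real_derivative (- (2 * x))) (at x within {-A..A})"
        by (auto intro!: derivative_eq_intros)
      have d2: "((\<lambda>x. (A^2-x^2)^(Suc n)) has_real_derivative (real (Suc n) * (A^2-x^2)^n * (- (2 * x)))) (at x within {-A..A})"
        using DERIV_power[OF d, of "Suc n"] by (simp add: ac_simps)
      note d3 = DERIV_mult[OF DERIV_ident d2]
      show "((\<lambda>x. x * (A^2-x^2)^(Suc n)) has_real_derivative
           ((A^2-x^2)^(Suc n) - 2 * real (Suc n) * x^2 * (A^2-x^2)^n)) (at x within {-A..A})"
        by (rule DERIV_cong[OF d3]) (simp add: power2_eq_square algebra_simps)
    qed
  qed
  then have I1: "((\<lambda>x. (A^2-x^2)^(Suc n) - 2 * real (Suc n) * x^2 * (A^2-x^2)^n) has_integral 0) {-A..A}"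
    by simp
  have eq: "(A^2-x^2)^(Suc n) - 2 * real (Suc n) * x^2 * (A^2-x^2)^n
     = (2 * real n + 3) * (A^2-x^2)^(Suc n) - 2 * real (Suc n) * A^2 * (A^2-x^2)^n" for x
    by (simp add: algebra_simps power2_eq_square)
  have I2: "((\<lambda>x. 2 * real (Suc n) * A^2 * (A^2-x^2)^n) has_integral (2 * real (Suc n) * A^2 * Jc A n)) {-A..A}"
    by (rule has_integral_mult_right) (rule Suc.IH)
  from has_integral_add[OF I1[unfolded eq] I2]
  have "((\<lambda>x. (2 * real n + 3) * (A^2-x^2)^(Suc n)) has_integral (2 * real (Suc n) * A^2 * Jc A n)) {-A..A}"
    by simp
  then have I3: "((\<lambda>x. inverse (2 * real n + 3) * ((2 * real n + 3) * (A^2-x^2)^(Suc n))) has_integral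
     (inverse (2 * real n + 3) * (2 * real (Suc n) * A^2 * Jc A n))) {-A..A}"
    by (rule has_integral_mult_right)
  moreover have E1: "inverse (2 * real n + 3) * (2 * real (Suc n) * A^2 * Jc A n) = Jc A (Suc n)"
  proof -
    have f1: "fact (2 * Suc n + 1) = (2 * real n + 3) * (2 * real n + 2) * ((2 * real n + 1) * (fact (2*n) :: real))"
      by (simp add: algebra_simps)
    have f0: "fact (2 * n + 1) = (2 * real n + 1) * (fact (2*n) :: real)"
      by (simp add: algebra_simps)
    have f2: "(fact (Suc n) :: real) = (real n + 1) * fact n" by simp
    have pw: "A^(2 * Suc n + 1) * 2^(2 * Suc n + 1) = (A^(2*n+1) * 2^(2*n+1)) * (4 * A^2)"
      by (simp add: power_add power2_eq_square algebra_simps)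
    have alg: "inverse (2 * m + 3) * (2 * (m+1) * A^2 * (P * G^2 / ((2*m+1) * F)))
       = P * (4 * A^2) * ((m+1) * G)^2 / ((2*m+3) * (2*m+2) * ((2*m+1) * F))"
      if "F > 0" "m \<ge> 0" for m F P G :: real
    proof -
      have a: "2*m+3 \<noteq> 0" "2*m+1 \<noteq> 0" "2*m+2 \<noteq> 0" "F \<noteq> 0" using that by auto
      show ?thesis
        by (simp add: divide_simps a) (simp add: algebra_simps power2_eq_square)
    qed
    show ?thesis unfolding Jc_def f0 f1 f2 pw
      using alg[of "fact (2*n)" "real n" "A^(2*n+1) * 2^(2*n+1)" "fact n"] by (simp add: algebra_simps)
  qed
  moreover have E2: "(\<lambda>x. inverse (2 * real n + 3) * ((2 * real n + 3) * (A^2-x^2)^(Suc n))) = (\<lambda>x. (A^2-x^2)^(Suc n))"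
  proof
    fix x
    have nz: "2 * real n + 3 \<noteq> 0" by simp
    show "inverse (2 * real n + 3) * ((2 * real n + 3) * (A^2-x^2)^(Suc n)) = (A^2-x^2)^(Suc n)"
      unfolding mult.assoc[symmetric] using nz by simp
  qed
  from I3 show ?case unfolding E1 E2 .
qed

lemma sinh_series: "(\<lambda>n. z^(2*n+1) / fact (2*n+1)) sums sinh (z::real)"
proof -
  from sinh_converges[of z] have "(\<lambda>n. if even n then 0 else z ^ n /\<^sub>R fact n) sums sinh z" .
  also have "?this \<longleftrightarrow> (\<lambda>n. z^(2*n+1) / fact (2*n+1)) sums sinh z"
    by (subst sums_mono_reindex[of "\<lambda>n. 2*n+1", symmetric])
       (auto simp: strict_mono_def divide_inverse mult.commute elim!: oddE)
  finally show ?thesis .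
qed

lemma term_eq:
  assumes "c > 0" "lam > 0"
  shows "bc n * (lam^2/(4*c^2))^n * Jc (c*t) n = (2*c/lam) * ((lam*t)^(2*n+1) / fact (2*n+1))"
proof -
  have e1: "(lam^2/(4*c^2))^n = lam^(2*n) / (2^(2*n) * c^(2*n))"
    by (simp add: power_divide power_mult_distrib power_mult)
  have e2: "(c*t)^(2*n+1) = c^(2*n) * c * t^(2*n+1)" by (simp add: power_mult_distrib)
  have e3: "(lam*t)^(2*n+1) = lam^(2*n) * lam * t^(2*n+1)" by (simp add: power_mult_distrib)
  have e4: "(2::real)^(2*n+1) = 2^(2*n) * 2" by simp
  have gen: "inverse (F^2) * (L / (Q * C)) * (C * c * T * (Q * 2) * F^2 / G) = 2 * c / lam * (L * lam * T / G)"
    if "F > 0" "Q > 0" "C > 0" "lam > 0" for F L Q C T G :: real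
    using that by (simp add: field_simps power2_eq_square)
  show ?thesis
    unfolding bc_def Jc_def e1 e2 e3 e4
    by (rule gen) (use assms in auto)
qed

lemma tel_eq_g0:
  assumes "c > 0" "c^2 * t^2 - x^2 \<ge> 0"
  shows "tel_density c lam x t = lam * g0 ((lam^2/(4*c^2)) * (c^2 * t^2 - x^2)) / (2 * c * sinh (lam * t))"
proof -
  have "((lam / c) * sqrt (c^2 * t^2 - x^2) / 2)^2 = (lam^2/(4*c^2)) * (c^2 * t^2 - x^2)"
    using assms by (simp add: power_mult_distrib power_divide)
  then show ?thesis unfolding tel_density_def bessel_g0 by simp
qed

lemma integral_part:
  assumes c: "c > 0" and l: "lam > 0" and t: "t > 0"
  shows "((\<lambda>x. tel_density c lam x t) has_integral 1) {-c*t..c*t}"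
proof -
  define A where "A = c * t"
  define a where "a = lam^2/(4*c^2)"
  have A0: "A \<ge> 0" using c t by (simp add: A_def)
  have a0: "a \<ge> 0" by (simp add: a_def)
  define f where "f k x = (\<Sum>n<k. bc n * (a * (A^2 - x^2))^n)" for k x
  define S where "S = {-A..A}"
  have fint: "(f k has_integral (\<Sum>n<k. bc n * a^n * Jc A n)) S" for k
    unfolding f_def S_def
    by (rule has_integral_sum) (auto simp: power_mult_distrib mult.assoc intro!: has_integral_mult_right J_int A0)
  have sq: "x \<in> S \<Longrightarrow> A^2 - x^2 \<ge> 0" for x
    unfolding S_def using A0 by (auto simp: abs_le_square_iff[symmetric] abs_le_iff)
  have "(\<lambda>n. bc n * a^n * Jc A n) sums ((2*c/lam) * sinh (lam * t))"
    unfolding a_def A_def term_eq[OF c l] by (intro sums_mult sinh_series)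
  moreover have "integral S (f k) = (\<Sum>n<k. bc n * a^n * Jc A n)" for k
    using fint integral_unique by blast
  ultimately have lim: "(\<lambda>k. integral S (f k)) \<longlonglongrightarrow> (2*c/lam) * sinh (lam * t)"
    by (simp add: sums_def)
  have mc: "(\<lambda>x. g0 (a * (A^2 - x^2))) integrable_on S \<and>
       ((\<lambda>k. integral S (f k)) \<longlongrightarrow> integral S (\<lambda>x. g0 (a * (A^2 - x^2)))) sequentially"
  proof (rule monotone_convergence_increasing)
    show "f k integrable_on S" for k using fint by blast
    show "f k x \<le> f (Suc k) x" if "x \<in> S" for k x
      unfolding f_def using sq[OF that] a0 by (simp add: bc_def)
    show "(\<lambda>k. f k x) \<longlonglongrightarrow> g0 (a * (A^2 - x^2))" for x
      unfolding f_def g0_def using summable_bc[of "a * (A^2 - x^2)"]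
      by (rule summable_LIMSEQ)
    from lim show "bounded (range (\<lambda>k. integral S (f k)))"
      by (rule convergent_imp_bounded)
  qed
  have IE: "integral S (\<lambda>x. g0 (a * (A^2 - x^2))) = (2*c/lam) * sinh (lam * t)"
    using LIMSEQ_unique[OF conjunct2[OF mc] lim] .
  have "((\<lambda>x. g0 (a * (A^2 - x^2))) has_integral ((2*c/lam) * sinh (lam * t))) S"
    using integrable_integral[OF conjunct1[OF mc]] unfolding IE .
  then have "((\<lambda>x. (lam / (2 * c * sinh (lam * t))) * g0 (a * (A^2 - x^2))) has_integral
      ((lam / (2 * c * sinh (lam * t))) * ((2*c/lam) * sinh (lam * t)))) S"
    by (rule has_integral_mult_right)
  moreover have "(lam / (2 * c * sinh (lam * t))) * ((2*c/lam) * sinh (lam * t)) = 1"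
    using c l t by (simp add: field_simps)
  ultimately have I: "((\<lambda>x. (lam / (2 * c * sinh (lam * t))) * g0 (a * (A^2 - x^2))) has_integral 1) S"
    by simp
  have mct: "-c*t = -(c*t)" by simp
  show ?thesis unfolding mct
  proof (rule has_integral_eq[OF _ I[unfolded S_def A_def]])
    fix x assume "x \<in> {-(c*t)..c*t}"
    then have "c^2 * t^2 - x^2 \<ge> 0" using sq[of x] unfolding S_def A_def by (simp add: power_mult_distrib)
    then show "lam / (2 * c * sinh (lam * t)) * g0 (a * ((c*t)^2 - x^2)) = tel_density c lam x t"
      using tel_eq_g0[OF c] unfolding a_def by (simp add: power_mult_distrib)
  qed
qed



lemma g0_chain [derivative_intros]:
  "(f has_real_derivative f') (at x within X) \<Longrightarrow>
   ((\<lambda>x. g0 (f x)) has_real_derivative (g1 (f x) * f')) (at x within X)"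
  using DERIV_chain2[OF g0_deriv] by blast
lemma g1_chain [derivative_intros]:
  "(f has_real_derivative f') (at x within X) \<Longrightarrow>
   ((\<lambda>x. g1 (f x)) has_real_derivative (g2 (f x) * f')) (at x within X)"
  using DERIV_chain2[OF g1_deriv] by blast

definition uu :: "real \<Rightarrow> real \<Rightarrow> real \<Rightarrow> real \<Rightarrow> real" where
  "uu c lam y s = lam^2/(4*c^2) * (c^2 * s^2 - y^2)"
definition Vt :: "real \<Rightarrow> real \<Rightarrow> real \<Rightarrow> real \<Rightarrow> real" where
  "Vt c lam y s = g1 (uu c lam y s) * (lam^2/(4*c^2) * (2 * c^2 * s))"
definition Vtt :: "real \<Rightarrow> real \<Rightarrow> real \<Rightarrow> real \<Rightarrow> real" where
  "Vtt c lam y s = g2 (uu c lam y s) * (lam^2/(4*c^2) * (2 * c^2 * s))^2 + g1 (uu c lam y s) * (lam^2/(4*c^2) * (2 * c^2))"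
definition Vx :: "real \<Rightarrow> real \<Rightarrow> real \<Rightarrow> real \<Rightarrow> real" where
  "Vx c lam y s = g1 (uu c lam y s) * (lam^2/(4*c^2) * (- 2 * y))"
definition Vxx :: "real \<Rightarrow> real \<Rightarrow> real \<Rightarrow> real \<Rightarrow> real" where
  "Vxx c lam y s = g2 (uu c lam y s) * (lam^2/(4*c^2) * (- 2 * y))^2 + g1 (uu c lam y s) * (lam^2/(4*c^2) * (- 2))"

lemma uu_t: "((\<lambda>r. uu c lam y r) has_real_derivative (lam^2/(4*c^2) * (2 * c^2 * s))) (at s)"
proof -
  have "((\<lambda>r. c^2 * r^2 - y^2) has_real_derivative (2 * c^2 * s)) (at s)"
    by (auto intro!: derivative_eq_intros)
  from DERIV_cmult[OF this, of "lam^2/(4*c^2)"] show ?thesis unfolding uu_def .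
qed
lemma uu_x: "((\<lambda>r. uu c lam r s) has_real_derivative (lam^2/(4*c^2) * (- 2 * y))) (at y)"
proof -
  have "((\<lambda>r. c^2 * s^2 - r^2) has_real_derivative (- 2 * y)) (at y)"
    by (auto intro!: derivative_eq_intros)
  from DERIV_cmult[OF this, of "lam^2/(4*c^2)"] show ?thesis unfolding uu_def .
qed

lemma W_t: "((\<lambda>r. g0 (uu c lam y r)) has_real_derivative Vt c lam y s) (at s)"
  unfolding Vt_def by (rule g0_chain[OF uu_t])
lemma W_x: "((\<lambda>r. g0 (uu c lam r s)) has_real_derivative Vx c lam y s) (at y)"
  unfolding Vx_def by (rule g0_chain[OF uu_x])

lemma Vt_t: "((\<lambda>r. Vt c lam y r) has_real_derivative Vtt c lam y s) (at s)"
proof -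
  have "((\<lambda>r. 2 * c^2 * r) has_real_derivative (2 * c^2)) (at s)"
    by (auto intro!: derivative_eq_intros)
  note l = DERIV_cmult[OF this, of "lam^2/(4*c^2)"]
  note d = DERIV_mult[OF g1_chain[OF uu_t] l]
  show ?thesis unfolding Vt_def[abs_def] Vtt_def
    by (rule DERIV_cong[OF d]) (simp add: power2_eq_square algebra_simps)
qed

lemma Vx_x: "((\<lambda>r. Vx c lam r s) has_real_derivative Vxx c lam y s) (at y)"
proof -
  have "((\<lambda>r. - 2 * r) has_real_derivative (- 2)) (at y)"
    by (auto intro!: derivative_eq_intros)
  note l = DERIV_cmult[OF this, of "lam^2/(4*c^2)"]
  note d = DERIV_mult[OF g1_chain[OF uu_x] l]
  show ?thesis unfolding Vx_def[abs_def] Vxx_def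
    by (rule DERIV_cong[OF d]) (simp add: power2_eq_square algebra_simps)
qed

lemma quot_gen:
  assumes W: "(W has_real_derivative W') (at s)" and S: "sinh (lam * s) \<noteq> 0"
  shows "((\<lambda>r. K * W r / sinh (lam * r)) has_real_derivative
      K * (W' / sinh (lam * s) - lam * cosh (lam * s) * W s / (sinh (lam * s))^2)) (at s)"
proof -
  have s1: "((\<lambda>r. sinh (lam * r)) has_real_derivative (cosh (lam * s) * lam)) (at s)"
    by (auto intro!: derivative_eq_intros)
  note d = DERIV_divide[OF DERIV_cmult[OF W, of K] s1 S]
  show ?thesis
    by (rule DERIV_cong[OF d]) (use S in \<open>simp add: field_simps power2_eq_square\<close>)
qed

lemma quot2_gen:
  assumes W: "(W has_real_derivative V s) (at s)" and V: "(V has_real_derivative V') (at s)"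
    and S: "sinh (lam * s) \<noteq> 0"
  shows "((\<lambda>r. K * (V r / sinh (lam * r) - lam * cosh (lam * r) * W r / (sinh (lam * r))^2)) has_real_derivative
      K * (V' / sinh (lam * s) - 2 * lam * cosh (lam * s) * V s / (sinh (lam * s))^2
           - lam^2 * W s / sinh (lam * s) + 2 * lam^2 * (cosh (lam * s))^2 * W s / (sinh (lam * s))^3)) (at s)"
proof -
  have s1: "((\<lambda>r. sinh (lam * r)) has_real_derivative (cosh (lam * s) * lam)) (at s)"
    by (auto intro!: derivative_eq_intros)
  have c1: "((\<lambda>r. lam * cosh (lam * r) * W r) has_real_derivative
       (lam * (sinh (lam * s) * lam) * W s + lam * cosh (lam * s) * V s)) (at s)"
  proof -
    have cs: "((\<lambda>r. cosh (lam * r)) has_real_derivative (sinh (lam * s) * lam)) (at s)"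
      by (auto intro!: derivative_eq_intros)
    show ?thesis using DERIV_mult[OF DERIV_cmult[OF cs, of lam] W] by (simp add: ac_simps)
  qed
  have s2: "((\<lambda>r. (sinh (lam * r))^2) has_real_derivative (2 * sinh (lam * s) * (cosh (lam * s) * lam))) (at s)"
    using DERIV_power[OF s1, of 2] by (simp add: ac_simps)
  have S2: "(sinh (lam * s))^2 \<noteq> 0" using S by simp
  note d1 = DERIV_divide[OF V s1 S]
  note d2 = DERIV_divide[OF c1 s2 S2]
  note d = DERIV_cmult[OF DERIV_diff[OF d1 d2], of K]
  show ?thesis
    by (rule DERIV_cong[OF d]) (use S in \<open>simp add: field_simps power2_eq_square power3_eq_cube\<close>)
qed



definition Pf :: "real \<Rightarrow> real \<Rightarrow> real \<Rightarrow> real \<Rightarrow> real" where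
  "Pf c lam y s = (lam/(2*c)) * g0 (uu c lam y s) / sinh (lam * s)"
definition Pt :: "real \<Rightarrow> real \<Rightarrow> real \<Rightarrow> real \<Rightarrow> real" where
  "Pt c lam y s = (lam/(2*c)) * (Vt c lam y s / sinh (lam * s) - lam * cosh (lam * s) * g0 (uu c lam y s) / (sinh (lam * s))^2)"
definition Ptt :: "real \<Rightarrow> real \<Rightarrow> real \<Rightarrow> real \<Rightarrow> real" where
  "Ptt c lam y s = (lam/(2*c)) * (Vtt c lam y s / sinh (lam * s) - 2 * lam * cosh (lam * s) * Vt c lam y s / (sinh (lam * s))^2
           - lam^2 * g0 (uu c lam y s) / sinh (lam * s) + 2 * lam^2 * (cosh (lam * s))^2 * g0 (uu c lam y s) / (sinh (lam * s))^3)"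
definition Px :: "real \<Rightarrow> real \<Rightarrow> real \<Rightarrow> real \<Rightarrow> real" where
  "Px c lam y s = (lam/(2*c)) * Vx c lam y s / sinh (lam * s)"
definition Pxx :: "real \<Rightarrow> real \<Rightarrow> real \<Rightarrow> real \<Rightarrow> real" where
  "Pxx c lam y s = (lam/(2*c)) * Vxx c lam y s / sinh (lam * s)"

lemma Pf_t: "sinh (lam * s) \<noteq> 0 \<Longrightarrow> ((\<lambda>r. Pf c lam y r) has_real_derivative Pt c lam y s) (at s)"
  unfolding Pf_def Pt_def by (rule quot_gen[OF W_t])

lemma Pt_t: "sinh (lam * s) \<noteq> 0 \<Longrightarrow> ((\<lambda>r. Pt c lam y r) has_real_derivative Ptt c lam y s) (at s)"
  unfolding Pt_def Ptt_def by (rule quot2_gen[OF W_t Vt_t])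

lemma Pf_x: "((\<lambda>r. Pf c lam r s) has_real_derivative Px c lam y s) (at y)"
  unfolding Pf_def Px_def by (rule DERIV_cdivide[OF DERIV_cmult[OF W_x]])

lemma Px_x: "((\<lambda>r. Px c lam r s) has_real_derivative Pxx c lam y s) (at y)"
  unfolding Px_def Pxx_def by (rule DERIV_cdivide[OF DERIV_cmult[OF Vx_x]])

lemma tel_Pf: "c > 0 \<Longrightarrow> c^2 * s^2 - y^2 \<ge> 0 \<Longrightarrow> tel_density c lam y s = Pf c lam y s"
  using tel_eq_g0[of c s y lam] unfolding Pf_def uu_def by simp

lemma pde_alg:
  fixes S c G0 G1 G2 lam t x K C :: real
  assumes S: "S \<noteq> 0" and c: "c \<noteq> 0"
    and G0: "G0 = G1 + (lam^2/(4*c^2) * (c^2 * t^2 - x^2)) * G2"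
  shows "K * ((G2 * (lam^2/(4*c^2) * (2 * c^2 * t))^2 + G1 * (lam^2/(4*c^2) * (2 * c^2))) / S
            - 2 * lam * C * (G1 * (lam^2/(4*c^2) * (2 * c^2 * t))) / S^2
            - lam^2 * G0 / S + 2 * lam^2 * C^2 * G0 / S^3)
       + 2 * lam * (C / S) * (K * ((G1 * (lam^2/(4*c^2) * (2 * c^2 * t))) / S - lam * C * G0 / S^2))
     = c^2 * (K * (G2 * (lam^2/(4*c^2) * (- 2 * x))^2 + G1 * (lam^2/(4*c^2) * (- 2))) / S)"
proof -
  define V where "V = G1 * (lam^2/(4*c^2) * (2 * c^2 * t))"
  define VV where "VV = G2 * (lam^2/(4*c^2) * (2 * c^2 * t))^2 + G1 * (lam^2/(4*c^2) * (2 * c^2))"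
  define XX where "XX = G2 * (lam^2/(4*c^2) * (- 2 * x))^2 + G1 * (lam^2/(4*c^2) * (- 2))"
  have step1: "K * (VV / S - 2 * lam * C * V / S^2 - lam^2 * G0 / S + 2 * lam^2 * C^2 * G0 / S^3)
       + 2 * lam * (C / S) * (K * (V / S - lam * C * G0 / S^2)) = K * (VV - lam^2 * G0) / S"
    using S by (simp add: field_simps power2_eq_square power3_eq_cube)
  have step2: "VV - lam^2 * G0 = c^2 * XX"
    unfolding VV_def XX_def G0 using c by (simp add: field_simps power2_eq_square)
  show ?thesis
    using step1 step2 unfolding V_def[symmetric] VV_def[symmetric] XX_def[symmetric]
    by simp
qed

lemma pde_point:
  assumes c: "c > 0" and S: "sinh (lam * t) \<noteq> 0"
  shows "Ptt c lam x t + 2 * lam * (cosh (lam * t) / sinh (lam * t)) * Pt c lam x t = c^2 * Pxx c lam x t"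
  unfolding Ptt_def Pt_def Pxx_def Vtt_def Vt_def Vxx_def
proof (rule pde_alg[OF S])
  show "c \<noteq> 0" using c by simp
  show "g0 (uu c lam x t) = g1 (uu c lam x t) + lam\<^sup>2 / (4 * c\<^sup>2) * (c\<^sup>2 * t\<^sup>2 - x\<^sup>2) * g2 (uu c lam x t)"
    unfolding uu_def[of c lam x t, symmetric] by (rule g_ode)
qed



theorem mainTheorem3:
  fixes c lam :: real
  assumes "c > 0" and "lam > 0"
  shows "(\<forall>t>0. ((\<lambda>x. tel_density c lam x t) has_integral 1) {-c*t..c*t})
       \<and> (\<forall>t x. t > 0 \<and> \<bar>x\<bar> < c * t \<longrightarrow>
            (\<lambda>s. tel_density c lam x s) differentiable (at t)
          \<and> (\<lambda>s. deriv (\<lambda>r. tel_density c lam x r) s) differentiable (at t)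
          \<and> (\<lambda>y. tel_density c lam y t) differentiable (at x)
          \<and> (\<lambda>y. deriv (\<lambda>z. tel_density c lam z t) y) differentiable (at x)
          \<and> deriv (\<lambda>s. deriv (\<lambda>r. tel_density c lam x r) s) t
              + 2 * lam * (cosh (lam * t) / sinh (lam * t)) * deriv (\<lambda>r. tel_density c lam x r) t
            = c\<^sup>2 * deriv (\<lambda>y. deriv (\<lambda>z. tel_density c lam z t) y) x)"
proof (intro conjI allI impI)
  fix t :: real assume "t > 0"
  then show "((\<lambda>x. tel_density c lam x t) has_integral 1) {-c*t..c*t}"
    using integral_part[OF assms] by blast
next
  fix t x :: real assume tx: "t > 0 \<and> \<bar>x\<bar> < c * t"
  have c: "c > 0" and l: "lam > 0" by (fact assms)+
  have t: "t > 0" using tx by simp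
  define U where "U = {s::real. 0 < s \<and> x^2 < c^2 * s^2}"
  define V where "V = {y::real. y^2 < c^2 * t^2}"
  have oU: "open U" unfolding U_def
    by (intro open_Collect_conj open_Collect_less continuous_intros)
  have oV: "open V" unfolding V_def
    by (intro open_Collect_less continuous_intros)
  have sq: "x^2 < c^2 * t^2"
  proof -
    have "\<bar>x\<bar>^2 < (c*t)^2" using tx by (intro power_strict_mono) auto
    then show ?thesis by (simp add: power_mult_distrib)
  qed
  have tU: "t \<in> U" using t sq by (simp add: U_def)
  have xV: "x \<in> V" using sq by (simp add: V_def)
  have Snz: "s > 0 \<Longrightarrow> sinh (lam * s) \<noteq> 0" for s using l by simp
  have eqU: "r \<in> U \<Longrightarrow> Pf c lam x r = tel_density c lam x r" for r
    using tel_Pf[OF c, of r x] by (simp add: U_def)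
  have dt: "((\<lambda>r. tel_density c lam x r) has_real_derivative Pt c lam x s) (at s)" if "s \<in> U" for s
    using has_field_derivative_transform_within_open[OF Pf_t[OF Snz] oU that eqU] that by (simp add: U_def)
  have dtd: "deriv (\<lambda>r. tel_density c lam x r) s = Pt c lam x s" if "s \<in> U" for s
    using DERIV_imp_deriv[OF dt[OF that]] .
  have dtt: "((\<lambda>s. deriv (\<lambda>r. tel_density c lam x r) s) has_real_derivative Ptt c lam x t) (at t)"
    using has_field_derivative_transform_within_open[OF Pt_t[OF Snz[OF t]] oU tU] dtd by simp
  have eqV: "r \<in> V \<Longrightarrow> Pf c lam r t = tel_density c lam r t" for r
    using tel_Pf[OF c, of t r] by (simp add: V_def)
  have dx: "((\<lambda>r. tel_density c lam r t) has_real_derivative Px c lam y t) (at y)" if "y \<in> V" for y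
    using has_field_derivative_transform_within_open[OF Pf_x oV that eqV] .
  have dxd: "deriv (\<lambda>r. tel_density c lam r t) y = Px c lam y t" if "y \<in> V" for y
    using DERIV_imp_deriv[OF dx[OF that]] .
  have dxx: "((\<lambda>y. deriv (\<lambda>z. tel_density c lam z t) y) has_real_derivative Pxx c lam x t) (at x)"
    using has_field_derivative_transform_within_open[OF Px_x oV xV] dxd by simp
  show "(\<lambda>s. tel_density c lam x s) differentiable (at t)"
    using dt[OF tU] real_differentiable_def by blast
  show "(\<lambda>s. deriv (\<lambda>r. tel_density c lam x r) s) differentiable (at t)"
    using dtt real_differentiable_def by blast
  show "(\<lambda>y. tel_density c lam y t) differentiable (at x)"
    using dx[OF xV] real_differentiable_def by blast
  show "(\<lambda>y. deriv (\<lambda>z. tel_density c lam z t) y) differentiable (at x)"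
    using dxx real_differentiable_def by blast
  show "deriv (\<lambda>s. deriv (\<lambda>r. tel_density c lam x r) s) t
        + 2 * lam * (cosh (lam * t) / sinh (lam * t)) * deriv (\<lambda>r. tel_density c lam x r) t
      = c\<^sup>2 * deriv (\<lambda>y. deriv (\<lambda>z. tel_density c lam z t) y) x"
    unfolding DERIV_imp_deriv[OF dtt] DERIV_imp_deriv[OF dxx] dtd[OF tU]
    by (rule pde_point[OF c Snz[OF t]])
qed

end
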